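(* Let $G$ be a finite group, $k\ge 3$ an integer, and $A_1,\ldots,A_k\subseteq G$ nonempty subsets such that the multiplication map $A_1\times\cdots\times A_k\to G$, $(a_1,\ldots,a_k)\mapsto a_1\cdots a_k$, is a bijection. Fix $i$ with $1<i<k$, and let $K$, $H$, $K'$ be the subgroups of $G$ generated by the set $A_1\cdots A_{i-1}=\{a_1\cdots a_{i-1}: a_j\in A_j\}$, by $A_i$, and by the set $A_{i+1}\cdots A_k=\{a_{i+1}\cdots a_k: a_j\in A_j\}$, respectively. Let $M$ be the subgroup of $G$ generated by all conjugates $xHx^{-1}$ with $x\in K$, and $M'$ the subgroup generated by all conjugates $xHx^{-1}$ with $x\in K'$. Then $\mathrm{card}(A_i)$ divides both $|M|$ and $|M'|$. *)

theory Defs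
  imports "HOL-Algebra.Algebra" "HOL-Library.FuncSet"
begin

fun seq_prod :: "('a, 'b) monoid_scheme \<Rightarrow> (nat \<Rightarrow> 'a) \<Rightarrow> nat \<Rightarrow> nat \<Rightarrow> 'a" where
  "seq_prod G a m 0 = (if m = 0 then a 0 else \<one>\<^bsub>G\<^esub>)"
| "seq_prod G a m (Suc n) =
     (if m \<le> Suc n then seq_prod G a m n \<otimes>\<^bsub>G\<^esub> a (Suc n) else \<one>\<^bsub>G\<^esub>)"

definition set_seq_prod :: "('a, 'b) monoid_scheme \<Rightarrow> (nat \<Rightarrow> 'a set) \<Rightarrow> nat \<Rightarrow> nat \<Rightarrow> 'a set" where
  "set_seq_prod G A m n = (\<lambda>a. seq_prod G a m n) ` (Pi\<^sub>E {m..n} A)"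

end

theory Submission
  imports Defs
begin

lemma seq_prod_one: "n < m \<Longrightarrow> seq_prod G a m n = \<one>\<^bsub>G\<^esub>"
  by (cases n) auto

lemma seq_prod_carrier:
  assumes "monoid G" shows "(\<forall>l\<in>{m..n}. a l \<in> carrier G) \<Longrightarrow> seq_prod G a m n \<in> carrier G"
proof (induction n)
  case 0 then show ?case using monoid.one_closed[OF assms] by auto
next
  case (Suc n) then show ?case using monoid.m_closed[OF assms] monoid.one_closed[OF assms] by auto
qed

lemma seq_prod_cong: "(\<forall>l\<in>{m..n}. a l = a' l) \<Longrightarrow> seq_prod G a m n = seq_prod G a' m n"
  by (induction n) auto

lemma seq_prod_split:
  assumes "monoid G"
  shows "\<forall>l\<in>{m..n}. a l \<in> carrier G \<Longrightarrow> m \<le> j \<Longrightarrow> j < n \<Longrightarrow>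
     seq_prod G a m n = seq_prod G a m j \<otimes>\<^bsub>G\<^esub> seq_prod G a (Suc j) n"
proof (induction n arbitrary: j)
  case 0 then show ?case by simp
next
  case (Suc n)
  show ?case
  proof (cases "j = n")
    case True
    then show ?thesis using Suc.prems seq_prod_one[of n "Suc n" G a]
      by (simp add: seq_prod_carrier[OF assms] monoid.l_one[OF assms])
  next
    case False
    then have jn: "j < n" using Suc.prems by auto
    have IH: "seq_prod G a m n = seq_prod G a m j \<otimes>\<^bsub>G\<^esub> seq_prod G a (Suc j) n"
      using Suc.IH[OF _ Suc.prems(2) jn] Suc.prems(1) by auto
    have c1: "seq_prod G a m j \<in> carrier G" using Suc.prems jn by (intro seq_prod_carrier[OF assms]) auto
    have c2: "seq_prod G a (Suc j) n \<in> carrier G" using Suc.prems jn by (intro seq_prod_carrier[OF assms]) auto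
    have c3: "a (Suc n) \<in> carrier G" using Suc.prems jn by auto
    show ?thesis using Suc.prems jn IH c1 c2 c3 by (simp add: monoid.m_assoc[OF assms(1)])
  qed
qed

lemma seq_prod_three:
  assumes "monoid G" "\<forall>l\<in>{1..k}. a l \<in> carrier G" "1 < i" "i < k"
  shows "seq_prod G a 1 k = seq_prod G a 1 (i - 1) \<otimes>\<^bsub>G\<^esub> a i \<otimes>\<^bsub>G\<^esub> seq_prod G a (i + 1) k"
proof -
  have s1: "seq_prod G a 1 k = seq_prod G a 1 (i - 1) \<otimes>\<^bsub>G\<^esub> seq_prod G a i k"
    using seq_prod_split[OF assms(1) assms(2), of "i - 1"] assms by auto
  have s2: "seq_prod G a i k = seq_prod G a i i \<otimes>\<^bsub>G\<^esub> seq_prod G a (i+1) k"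
    using seq_prod_split[OF assms(1), of i k a i] assms by auto
  have s3: "seq_prod G a i i = a i"
    using assms seq_prod_one[of "i - 1" i G a]
    by (cases i) auto
  have c1: "seq_prod G a 1 (i - 1) \<in> carrier G" using assms by (intro seq_prod_carrier[OF assms(1)]) auto
  have c2: "seq_prod G a (i+1) k \<in> carrier G" using assms by (intro seq_prod_carrier[OF assms(1)]) auto
  have c3: "a i \<in> carrier G" using assms by auto
  show ?thesis using s1 s2 s3 c1 c2 c3 by (simp add: monoid.m_assoc[OF assms(1)])
qed



lemma count_dvd:
  fixes A :: "nat \<Rightarrow> 'b set" and f :: "(nat \<Rightarrow> 'b) \<Rightarrow> 'c" and i k :: nat
  assumes bij: "bij_betw f (Pi\<^sub>E {1..k} A) C"
    and i: "i \<in> {1..k}" and NC: "N \<subseteq> C"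
    and closed: "\<And>a x. a \<in> Pi\<^sub>E {1..k} A \<Longrightarrow> x \<in> A i \<Longrightarrow> f a \<in> N \<Longrightarrow> f (a(i:=x)) \<in> N"
  shows "card (A i) dvd card N"
proof -
  define P where "P = Pi\<^sub>E {1..k} A"
  define S where "S = {a\<in>P. f a \<in> N}"
  have "bij_betw f S N"
    unfolding bij_betw_def
  proof
    show "inj_on f S" using bij_betw_imp_inj_on[OF bij] unfolding S_def P_def
      by (rule inj_on_subset) auto
    show "f ` S = N"
    proof
      show "f ` S \<subseteq> N" unfolding S_def by auto
      show "N \<subseteq> f ` S"
      proof
        fix n assume "n \<in> N"
        then have "n \<in> f ` P" using NC bij unfolding bij_betw_def P_def by auto
        then obtain a where "a \<in> P" "n = f a" by auto
        then show "n \<in> f ` S" using \<open>n \<in> N\<close> unfolding S_def by auto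
      qed
    qed
  qed
  then have cS: "card S = card N" by (rule bij_betw_same_card)
  define g where "g = (\<lambda>a::nat \<Rightarrow> 'b. (a(i:=undefined), a i))"
  define T where "T = (\<lambda>a. a(i:=undefined)) ` S"
  have "bij_betw g S (T \<times> A i)"
    unfolding bij_betw_def
  proof
    show "inj_on g S"
    proof
      fix a b assume "g a = g b"
      then have "a(i:=undefined) = b(i:=undefined)" "a i = b i" unfolding g_def by auto
      then show "a = b" by (metis fun_upd_triv fun_upd_upd)
    qed
    show "g ` S = T \<times> A i"
    proof
      show "g ` S \<subseteq> T \<times> A i" unfolding g_def T_def S_def P_def using i by auto
      show "T \<times> A i \<subseteq> g ` S"
      proof
        fix p assume "p \<in> T \<times> A i"
        then obtain a x where a: "a \<in> S" and x: "x \<in> A i" and p: "p = (a(i:=undefined), x)"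
          unfolding T_def by auto
        have "a(i:=x) \<in> P" using a x i unfolding S_def P_def
          by (auto simp: PiE_iff extensional_def)
        moreover have "f (a(i:=x)) \<in> N" using closed a x unfolding S_def P_def by auto
        ultimately have "a(i:=x) \<in> S" unfolding S_def by auto
        moreover have "g (a(i:=x)) = p" unfolding g_def p by auto
        ultimately show "p \<in> g ` S" by force
      qed
    qed
  qed
  then have "card S = card (T \<times> A i)" by (rule bij_betw_same_card)
  then have "card N = card T * card (A i)" using cS by (simp add: card_cartesian_product)
  then show ?thesis by simp
qed


lemma conj_id1:
  fixes G (structure)
  assumes "group G" "b \<in> carrier G" "x \<in> carrier G" "y \<in> carrier G" "c \<in> carrier G"
  shows "b \<otimes> x \<otimes> c = (b \<otimes> (x \<otimes> inv y) \<otimes> inv b) \<otimes> (b \<otimes> y \<otimes> c)"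
proof -
  interpret group G by fact
  have c1: "\<And>u v. u \<in> carrier G \<Longrightarrow> v \<in> carrier G \<Longrightarrow> inv u \<otimes> (u \<otimes> v) = v"
    by (simp add: m_assoc[symmetric])
  have c2: "\<And>u v. u \<in> carrier G \<Longrightarrow> v \<in> carrier G \<Longrightarrow> u \<otimes> (inv u \<otimes> v) = v"
    by (simp add: m_assoc[symmetric])
  show ?thesis using assms(2-) by (simp add: m_assoc c1 c2)
qed

lemma conj_id2:
  fixes G (structure)
  assumes "group G" "b \<in> carrier G" "x \<in> carrier G" "y \<in> carrier G" "c \<in> carrier G"
  shows "b \<otimes> x \<otimes> c = (b \<otimes> y \<otimes> c) \<otimes> (inv c \<otimes> (inv y \<otimes> x) \<otimes> inv (inv c))"
proof -
  interpret group G by fact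
  have c1: "\<And>u v. u \<in> carrier G \<Longrightarrow> v \<in> carrier G \<Longrightarrow> inv u \<otimes> (u \<otimes> v) = v"
    by (simp add: m_assoc[symmetric])
  have c2: "\<And>u v. u \<in> carrier G \<Longrightarrow> v \<in> carrier G \<Longrightarrow> u \<otimes> (inv u \<otimes> v) = v"
    by (simp add: m_assoc[symmetric])
  show ?thesis using assms(2-) by (simp add: m_assoc c1 c2)
qed

lemma seq_prod_in_set:
  assumes "a \<in> Pi\<^sub>E {1..k} A" "1 \<le> m" "n \<le> k"
  shows "seq_prod G a m n \<in> set_seq_prod G A m n"
proof -
  have "restrict a {m..n} \<in> Pi\<^sub>E {m..n} A" using assms by auto
  moreover have "seq_prod G a m n = seq_prod G (restrict a {m..n}) m n"
    by (rule seq_prod_cong) auto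
  ultimately show ?thesis unfolding set_seq_prod_def by auto
qed


theorem lemma2p3:
  fixes G (structure) and A :: "nat \<Rightarrow> 'a set" and k i :: nat
  assumes "group G" and "finite (carrier G)" and "k \<ge> 3"
    and "\<And>j. j \<in> {1..k} \<Longrightarrow> A j \<subseteq> carrier G"
    and "\<And>j. j \<in> {1..k} \<Longrightarrow> A j \<noteq> {}"
    and "bij_betw (\<lambda>a. seq_prod G a 1 k) (Pi\<^sub>E {1..k} A) (carrier G)"
    and "1 < i" and "i < k"
  defines "K \<equiv> generate G (set_seq_prod G A 1 (i - 1))"
    and "H \<equiv> generate G (A i)"
    and "K' \<equiv> generate G (set_seq_prod G A (i + 1) k)"
  defines "M \<equiv> generate G (\<Union>x\<in>K. (\<lambda>h. x \<otimes> h \<otimes> inv x) ` H)"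
    and "M' \<equiv> generate G (\<Union>x\<in>K'. (\<lambda>h. x \<otimes> h \<otimes> inv x) ` H)"
  shows "card (A i) dvd card M \<and> card (A i) dvd card M'"
proof -
  interpret group G by fact
  have mon: "monoid G" by (rule is_monoid)
  have iI: "i \<in> {1..k}" using assms(7,8) by auto
  have Aic: "A i \<subseteq> carrier G" using assms(4) iI by auto
  have Hsub: "subgroup H G" unfolding H_def by (rule generate_is_subgroup[OF Aic])
  have AiH: "A i \<subseteq> H" unfolding H_def by (simp add: generate.incl subsetI)
  have Hc: "H \<subseteq> carrier G" by (rule subgroup.subset[OF Hsub])
  have PC: "\<And>a. a \<in> Pi\<^sub>E {1..k} A \<Longrightarrow> \<forall>l\<in>{1..k}. a l \<in> carrier G"
    using assms(4) by (meson PiE_mem subsetD)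
  have sc1: "set_seq_prod G A 1 (i - 1) \<subseteq> carrier G"
  proof
    fix y assume "y \<in> set_seq_prod G A 1 (i - 1)"
    then obtain a where a: "a \<in> Pi\<^sub>E {1..i - 1} A" "y = seq_prod G a 1 (i - 1)"
      unfolding set_seq_prod_def by auto
    have "\<forall>l\<in>{1..i - 1}. a l \<in> carrier G"
    proof
      fix l assume l: "l \<in> {1..i - 1}"
      then have "a l \<in> A l" using a(1) by (meson PiE_mem)
      moreover have "l \<in> {1..k}" using l assms(8) by auto
      ultimately show "a l \<in> carrier G" using assms(4) by blast
    qed
    then show "y \<in> carrier G" using a(2) seq_prod_carrier[OF mon] by simp
  qed
  have sc2: "set_seq_prod G A (i+1) k \<subseteq> carrier G"
  proof
    fix y assume "y \<in> set_seq_prod G A (i+1) k"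
    then obtain a where a: "a \<in> Pi\<^sub>E {i+1..k} A" "y = seq_prod G a (i+1) k"
      unfolding set_seq_prod_def by auto
    have "\<forall>l\<in>{i+1..k}. a l \<in> carrier G"
    proof
      fix l assume l: "l \<in> {i+1..k}"
      then have "a l \<in> A l" using a(1) by (meson PiE_mem)
      moreover have "l \<in> {1..k}" using l assms(7) by auto
      ultimately show "a l \<in> carrier G" using assms(4) by blast
    qed
    then show "y \<in> carrier G" using a(2) seq_prod_carrier[OF mon] by simp
  qed
  have Kc: "K \<subseteq> carrier G" unfolding K_def by (rule subgroup.subset[OF generate_is_subgroup[OF sc1]])
  have K'c: "K' \<subseteq> carrier G" unfolding K'_def by (rule subgroup.subset[OF generate_is_subgroup[OF sc2]])
  have K'sub: "subgroup K' G" unfolding K'_def by (rule generate_is_subgroup[OF sc2])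
  have g1c: "(\<Union>x\<in>K. (\<lambda>h. x \<otimes> h \<otimes> inv x) ` H) \<subseteq> carrier G" using Kc Hc by auto
  have g2c: "(\<Union>x\<in>K'. (\<lambda>h. x \<otimes> h \<otimes> inv x) ` H) \<subseteq> carrier G" using K'c Hc by auto
  have Msub: "subgroup M G" unfolding M_def by (rule generate_is_subgroup[OF g1c])
  have M'sub: "subgroup M' G" unfolding M'_def by (rule generate_is_subgroup[OF g2c])
  have dec: "seq_prod G (a(i:=x)) 1 k = seq_prod G a 1 (i - 1) \<otimes> x \<otimes> seq_prod G a (i + 1) k"
    if a: "a \<in> Pi\<^sub>E {1..k} A" and x: "x \<in> A i" for a x
  proof -
    have "a(i:=x) \<in> Pi\<^sub>E {1..k} A" using a x iI by (auto simp: PiE_iff extensional_def)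
    then have "\<forall>l\<in>{1..k}. (a(i:=x)) l \<in> carrier G" by (rule PC)
    then have "seq_prod G (a(i:=x)) 1 k = seq_prod G (a(i:=x)) 1 (i - 1) \<otimes> (a(i:=x)) i \<otimes> seq_prod G (a(i:=x)) (i + 1) k"
      using seq_prod_three[OF mon _ assms(7,8)] by blast
    moreover have "seq_prod G (a(i:=x)) 1 (i - 1) = seq_prod G a 1 (i - 1)"
      by (rule seq_prod_cong) auto
    moreover have "seq_prod G (a(i:=x)) (i + 1) k = seq_prod G a (i + 1) k"
      by (rule seq_prod_cong) auto
    ultimately show ?thesis by simp
  qed
  have dec0: "seq_prod G a 1 k = seq_prod G a 1 (i - 1) \<otimes> a i \<otimes> seq_prod G a (i + 1) k"
    if a: "a \<in> Pi\<^sub>E {1..k} A" for a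
    using dec[OF a, of "a i"] a iI by (simp add: PiE_iff)
  have bK: "seq_prod G a 1 (i - 1) \<in> K" if a: "a \<in> Pi\<^sub>E {1..k} A" for a
    unfolding K_def using seq_prod_in_set[OF a, of 1 "i - 1" G] assms(8)
    by (auto intro: generate.incl)
  have cK: "seq_prod G a (i + 1) k \<in> K'" if a: "a \<in> Pi\<^sub>E {1..k} A" for a
    unfolding K'_def using seq_prod_in_set[OF a, of "i + 1" k G] assms(8)
    by (auto intro: generate.incl)
  have part1: "card (A i) dvd card M"
  proof (rule count_dvd[OF assms(6) iI])
    show "M \<subseteq> carrier G" by (rule subgroup.subset[OF Msub])
    fix a x assume a: "a \<in> Pi\<^sub>E {1..k} A" and x: "x \<in> A i" and fa: "seq_prod G a 1 k \<in> M"
    define b where "b = seq_prod G a 1 (i - 1)"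
    define c where "c = seq_prod G a (i + 1) k"
    have ai: "a i \<in> A i" using a iI by auto
    have b: "b \<in> K" using bK[OF a] b_def by simp
    have c: "c \<in> K'" using cK[OF a] c_def by simp
    have h: "x \<otimes> inv (a i) \<in> H" using x ai AiH Hsub
      by (meson subgroup.m_closed subgroup.m_inv_closed subsetD)
    have "b \<otimes> (x \<otimes> inv (a i)) \<otimes> inv b \<in> M" unfolding M_def
      using b h by (auto intro: generate.incl)
    moreover have "b \<otimes> a i \<otimes> c \<in> M" using fa dec0[OF a] b_def c_def by simp
    ultimately have "(b \<otimes> (x \<otimes> inv (a i)) \<otimes> inv b) \<otimes> (b \<otimes> a i \<otimes> c) \<in> M"
      by (rule subgroup.m_closed[OF Msub])
    moreover have "seq_prod G (a(i:=x)) 1 k = b \<otimes> x \<otimes> c"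
      using dec[OF a x] b_def c_def by simp
    moreover have "b \<otimes> x \<otimes> c = (b \<otimes> (x \<otimes> inv (a i)) \<otimes> inv b) \<otimes> (b \<otimes> a i \<otimes> c)"
      by (rule conj_id1[OF assms(1)]) (use b c Kc K'c x ai Aic in auto)
    ultimately show "seq_prod G (a(i:=x)) 1 k \<in> M" by simp
  qed
  have part2: "card (A i) dvd card M'"
  proof (rule count_dvd[OF assms(6) iI])
    show "M' \<subseteq> carrier G" by (rule subgroup.subset[OF M'sub])
    fix a x assume a: "a \<in> Pi\<^sub>E {1..k} A" and x: "x \<in> A i" and fa: "seq_prod G a 1 k \<in> M'"
    define b where "b = seq_prod G a 1 (i - 1)"
    define c where "c = seq_prod G a (i + 1) k"
    have ai: "a i \<in> A i" using a iI by auto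
    have b: "b \<in> K" using bK[OF a] b_def by simp
    have c: "c \<in> K'" using cK[OF a] c_def by simp
    have ic: "inv c \<in> K'" using c by (rule subgroup.m_inv_closed[OF K'sub])
    have h: "inv (a i) \<otimes> x \<in> H" using x ai AiH Hsub
      by (meson subgroup.m_closed subgroup.m_inv_closed subsetD)
    have "b \<otimes> a i \<otimes> c \<in> M'" using fa dec0[OF a] b_def c_def by simp
    moreover have "inv c \<otimes> (inv (a i) \<otimes> x) \<otimes> inv (inv c) \<in> M'" unfolding M'_def
      using ic h by (auto intro: generate.incl)
    ultimately have "(b \<otimes> a i \<otimes> c) \<otimes> (inv c \<otimes> (inv (a i) \<otimes> x) \<otimes> inv (inv c)) \<in> M'"
      by (rule subgroup.m_closed[OF M'sub])
    moreover have "seq_prod G (a(i:=x)) 1 k = b \<otimes> x \<otimes> c"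
      using dec[OF a x] b_def c_def by simp
    moreover have "b \<otimes> x \<otimes> c = (b \<otimes> a i \<otimes> c) \<otimes> (inv c \<otimes> (inv (a i) \<otimes> x) \<otimes> inv (inv c))"
      by (rule conj_id2[OF assms(1)]) (use b c Kc K'c x ai Aic in auto)
    ultimately show "seq_prod G (a(i:=x)) 1 k \<in> M'" by simp
  qed
  show ?thesis using part1 part2 by simp
qed

end
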